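(* Every affine liner is $2$-balanced, i.e., all its lines have the same cardinality.
   Context: A liner is a set $X$ of points with a family of subsets called lines such that any two distinct points lie in a unique line and every line contains at least two points. For distinct $x,y$, $\overline{xy}$ is the line through them and $\overline{xx}:=\{x\}$. A liner $X$ is affine if for all $o,x,y\in X$ and $p\in\overline{xy}\setminus\overline{ox}$ there exists $u\in\overline{oy}$ such that for every $v\in\overline{oy}$: $u=v$ if and only if $\overline{vp}\cap\overline{ox}=\varnothing$. *)

theory Defs
  imports Main "HOL-Library.Equipollence"
begin

definition liner :: "'a set \<Rightarrow> 'a set set \<Rightarrow> bool" where
  "liner X L \<longleftrightarrow>
     (\<forall>l\<in>L. l \<subseteq> X \<and> (\<exists>a b. a \<in> l \<and> b \<in> l \<and> a \<noteq> b)) \<and>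
     (\<forall>x\<in>X. \<forall>y\<in>X. x \<noteq> y \<longrightarrow> (\<exists>!l. l \<in> L \<and> x \<in> l \<and> y \<in> l))"

definition line_through :: "'a set set \<Rightarrow> 'a \<Rightarrow> 'a \<Rightarrow> 'a set" where
  "line_through L x y = (if x = y then {x} else (THE l. l \<in> L \<and> x \<in> l \<and> y \<in> l))"

definition affine_liner :: "'a set \<Rightarrow> 'a set set \<Rightarrow> bool" where
  "affine_liner X L \<longleftrightarrow> liner X L \<and>
     (\<forall>c\<in>X. \<forall>x\<in>X. \<forall>y\<in>X. \<forall>p \<in> line_through L x y - line_through L c x.
        (\<exists>u\<in>line_through L c y. \<forall>v\<in>line_through L c y.
            (u = v \<longleftrightarrow> line_through L v p \<inter> line_through L c x = {})))"

end

theory Submission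
  imports Defs
begin

lemma lt_sym: "line_through L a b = line_through L b a"
  unfolding line_through_def by (simp add: conj_commute)

lemma lt_props:
  assumes "liner X L" "a \<in> X" "b \<in> X" "a \<noteq> b"
  shows "line_through L a b \<in> L \<and> a \<in> line_through L a b \<and> b \<in> line_through L a b"
proof -
  have "\<exists>!l. l \<in> L \<and> a \<in> l \<and> b \<in> l" using assms unfolding liner_def by blast
  then have "(THE l. l \<in> L \<and> a \<in> l \<and> b \<in> l) \<in> L \<and> a \<in> (THE l. l \<in> L \<and> a \<in> l \<and> b \<in> l)
     \<and> b \<in> (THE l. l \<in> L \<and> a \<in> l \<and> b \<in> l)" by (rule theI')
  then show ?thesis using assms(4) unfolding line_through_def by simp
qed

lemma lt_eq:
  assumes "liner X L" "l \<in> L" "a \<in> l" "b \<in> l" "a \<noteq> b"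
  shows "line_through L a b = l"
proof -
  have sub: "l \<subseteq> X" using assms unfolding liner_def by blast
  have "\<exists>!l. l \<in> L \<and> a \<in> l \<and> b \<in> l" using assms sub unfolding liner_def by blast
  then have "(THE l. l \<in> L \<and> a \<in> l \<and> b \<in> l) = l" using assms by (intro the1_equality) auto
  then show ?thesis using assms(5) unfolding line_through_def by simp
qed

lemma lt_self:
  assumes "liner X L" "a \<in> X" "b \<in> X"
  shows "a \<in> line_through L a b"
  using lt_props[OF assms] by (cases "a = b") (auto simp: line_through_def)

lemma bij_rel:
  assumes A1: "\<forall>a\<in>A. \<exists>!b. b\<in>B \<and> R a b" and A2: "\<forall>b\<in>B. \<exists>!a. a\<in>A \<and> R a b"
  shows "A \<approx> B"
proof -
  define f where "f a = (THE b. b\<in>B \<and> R a b)" for a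
  have f: "f a \<in> B \<and> R a (f a)" if "a \<in> A" for a
  proof -
    have "\<exists>!b. b\<in>B \<and> R a b" using A1 that by blast
    then show ?thesis unfolding f_def by (rule theI')
  qed
  have inj: "inj_on f A"
  proof (rule inj_onI)
    fix a a' assume aa: "a \<in> A" "a' \<in> A" "f a = f a'"
    have "f a \<in> B" "R a (f a)" "R a' (f a)" using f[OF aa(1)] f[OF aa(2)] aa(3) by auto
    moreover have "\<exists>!z. z\<in>A \<and> R z (f a)" using A2 \<open>f a \<in> B\<close> by blast
    ultimately show "a = a'" using aa by blast
  qed
  have sur: "B \<subseteq> f ` A"
  proof
    fix b assume b: "b \<in> B"
    then obtain a where a: "a \<in> A" "R a b" using A2 by blast
    have "\<exists>!z. z\<in>B \<and> R a z" using A1 a by blast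
    then have "f a = b" using f[OF a(1)] a b by blast
    then show "b \<in> f ` A" using a by blast
  qed
  have "bij_betw f A B" unfolding bij_betw_def using inj sur f by blast
  then show ?thesis unfolding eqpoll_def by blast
qed

definition RR :: "'a set set \<Rightarrow> 'a \<Rightarrow> 'a \<Rightarrow> 'a \<Rightarrow> 'a \<Rightarrow> bool" where
  "RR L x y a b \<longleftrightarrow> (a = x \<and> b = y) \<or>
     (a \<noteq> x \<and> b \<noteq> y \<and> line_through L a b \<inter> line_through L x y = {})"

lemma RR_sym: "RR L x y a b = RR L y x b a"
proof -
  have e: "line_through L b a = line_through L a b" "line_through L y x = line_through L x y"
    by (rule lt_sym)+
  show ?thesis unfolding RR_def e by blast
qed

lemma half:
  assumes aff: "affine_liner X L" and X: "c \<in> X" "x \<in> X" "y \<in> X"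
    and ox: "c \<noteq> x" and oy: "c \<noteq> y"
    and ne: "line_through L c x \<noteq> line_through L c y"
  shows "\<forall>a\<in>line_through L c x. \<exists>!b. b \<in> line_through L c y \<and> RR L x y a b"
proof
  have lin: "liner X L" using aff unfolding affine_liner_def by (rule conjunct1)
  have ax: "\<forall>c\<in>X. \<forall>x\<in>X. \<forall>y\<in>X. \<forall>p \<in> line_through L x y - line_through L c x.
        (\<exists>u\<in>line_through L c y. \<forall>v\<in>line_through L c y.
            (u = v \<longleftrightarrow> line_through L v p \<inter> line_through L c x = {}))"
    using aff unfolding affine_liner_def by (rule conjunct2)
  have l1: "line_through L c x \<in> L" "c \<in> line_through L c x" "x \<in> line_through L c x"
    using lt_props[OF lin X(1,2) ox] by auto
  have l2: "line_through L c y \<in> L" "c \<in> line_through L c y" "y \<in> line_through L c y"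
    using lt_props[OF lin X(1,3) oy] by auto
  have xy: "x \<noteq> y" using ne by auto
  have l3: "line_through L x y \<in> L" "x \<in> line_through L x y" "y \<in> line_through L x y"
    using lt_props[OF lin X(2,3) xy] by auto
  have sub1: "line_through L c x \<subseteq> X" using l1 lin unfolding liner_def by blast
  fix a assume a: "a \<in> line_through L c x"
  show "\<exists>!b. b \<in> line_through L c y \<and> RR L x y a b"
  proof (cases "a = x")
    case True
    then show ?thesis using l2 unfolding RR_def by auto
  next
    case False
    have "a \<notin> line_through L x y"
    proof
      assume "a \<in> line_through L x y"
      then have "line_through L x y = line_through L c x"
        using lt_eq[OF lin l3(1) l3(2) _ False[symmetric]] lt_eq[OF lin l1(1) l1(3) a False[symmetric]]
        by simp
      then have "y \<in> line_through L c x" using l3 by simp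
      then have "line_through L c x = line_through L c y"
        using lt_eq[OF lin l1(1) l1(2) _ oy] lt_eq[OF lin l2(1) l2(2) l2(3) oy] by simp
      then show False using ne by simp
    qed
    moreover have "line_through L x c = line_through L c x" "line_through L y x = line_through L x y"
      by (rule lt_sym)+
    ultimately have p: "a \<in> line_through L x c - line_through L y x"
      using a by simp
    obtain u where u: "u \<in> line_through L y c"
      and uu: "\<forall>v\<in>line_through L y c. (u = v \<longleftrightarrow> line_through L v a \<inter> line_through L y x = {})"
      using ax[rule_format, OF X(3) X(2) X(1) p] by blast
    have aX: "a \<in> X" using a sub1 by blast
    have "y \<in> line_through L y a" using lt_self[OF lin X(3) aX] .
    moreover have "y \<in> line_through L y x" using lt_self[OF lin X(3) X(2)] .
    ultimately have "line_through L y a \<inter> line_through L y x \<noteq> {}" by blast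
    have yc: "line_through L y c = line_through L c y" by (rule lt_sym)
    have uy: "u \<noteq> y" using uu l2(3) yc \<open>line_through L y a \<inter> line_through L y x \<noteq> {}\<close> by auto
    have R: "\<forall>v\<in>line_through L c y. (u = v \<longleftrightarrow> RR L x y a v)"
    proof
      fix v assume v: "v \<in> line_through L c y"
      have e: "line_through L v a = line_through L a v" "line_through L y x = line_through L x y"
        by (rule lt_sym)+
      show "(u = v \<longleftrightarrow> RR L x y a v)"
        using uu[rule_format, of v] v yc uy False unfolding RR_def e by auto
    qed
    show ?thesis
    proof (rule ex1I[where a=u])
      show "u \<in> line_through L c y \<and> RR L x y a u" using R u yc by auto
    next
      fix b assume "b \<in> line_through L c y \<and> RR L x y a b"
      then show "b = u" using R by auto
    qed
  qed
qed

lemma meet: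
  assumes aff: "affine_liner X L" and l: "l1 \<in> L" "l2 \<in> L" "c \<in> l1" "c \<in> l2"
  shows "l1 \<approx> l2"
proof (cases "l1 = l2")
  case True then show ?thesis by simp
next
  case False
  have lin: "liner X L" using aff unfolding affine_liner_def by (rule conjunct1)
  have s: "l1 \<subseteq> X" "l2 \<subseteq> X" using l lin unfolding liner_def by auto
  obtain x where x: "x \<in> l1" "x \<noteq> c" using l lin unfolding liner_def by metis
  obtain y where y: "y \<in> l2" "y \<noteq> c" using l lin unfolding liner_def by metis
  have e1: "line_through L c x = l1" using lt_eq[OF lin l(1) l(3) x(1)] x by auto
  have e2: "line_through L c y = l2" using lt_eq[OF lin l(2) l(4) y(1)] y by auto
  have X: "c \<in> X" "x \<in> X" "y \<in> X" using s l x y by auto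
  have h1: "\<forall>a\<in>line_through L c x. \<exists>!b. b \<in> line_through L c y \<and> RR L x y a b"
    using half[OF aff X] x y False e1 e2 by auto
  have h2: "\<forall>b\<in>line_through L c y. \<exists>!a. a \<in> line_through L c x \<and> RR L y x b a"
    using half[OF aff X(1,3,2)] x y False e1 e2 by auto
  have "line_through L c x \<approx> line_through L c y"
  proof (rule bij_rel[OF h1])
    show "\<forall>b\<in>line_through L c y. \<exists>!a. a \<in> line_through L c x \<and> RR L x y a b"
      using h2 unfolding RR_sym[of L x y] .
  qed
  then show ?thesis using e1 e2 by simp
qed

theorem theorem3p3p17:
  fixes X :: "'a set" and L :: "'a set set"
  assumes "affine_liner X L"
  shows "\<forall>l1\<in>L. \<forall>l2\<in>L. l1 \<approx> l2"
proof (intro ballI)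
  fix l1 l2 assume l: "l1 \<in> L" "l2 \<in> L"
  have lin: "liner X L" using assms unfolding affine_liner_def by blast
  show "l1 \<approx> l2"
  proof (cases "l1 \<inter> l2 = {}")
    case False
    then obtain c where "c \<in> l1" "c \<in> l2" by blast
    then show ?thesis using meet[OF assms l] by blast
  next
    case True
    obtain c where c: "c \<in> l1" using l lin unfolding liner_def by metis
    obtain y where y: "y \<in> l2" using l lin unfolding liner_def by metis
    have s: "l1 \<subseteq> X" "l2 \<subseteq> X" using l lin unfolding liner_def by auto
    have oy: "c \<noteq> y" using True c y by blast
    have l3: "line_through L c y \<in> L" "c \<in> line_through L c y" "y \<in> line_through L c y"
      using lt_props[OF lin _ _ oy] s c y by auto
    have "l1 \<approx> line_through L c y" using meet[OF assms l(1) l3(1) c l3(2)] .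
    also have "line_through L c y \<approx> l2" using meet[OF assms l3(1) l(2) l3(3) y] .
    finally show ?thesis .
  qed
qed

end
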